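(* Let $H$ be a graph with at least one edge, let $0<\delta\leq 1/4$, let $G$ be a $\delta$-dense graph, and let $A,B\subseteq V(G)$ be disjoint independent sets of $G$ such that $|A|\geq |B|\geq 1$, every vertex of $A$ is adjacent to every vertex of $V(G)\setminus A$, and every vertex of $B$ is adjacent to every vertex of $V(G)\setminus B$. Let $G_A$ be obtained from $G$ by deleting one vertex of $A$, and $G_B$ be obtained from $G$ by deleting one vertex of $B$. Then $$\mathrm{inj}(H,G_A)\geq \mathrm{inj}(H,G_B)+2e(H)\,(|A|-|B|)\bigl(1-3\delta\, v(H)^3\bigr)\, v(G)^{v(H)-2}.$$
   Context: $v(G)$ and $e(G)$ denote the numbers of vertices and edges of $G$. A graph $G$ is $\delta$-dense if $\deg(v)\geq (1-\delta)v(G)$ for every $v\in V(G)$. A map $\varphi:V(H)\to V(G)$ is a homomorphism from $H$ to $G$ if $\varphi(u)\varphi(v)\in E(G)$ for every $uv\in E(H)$; $\mathrm{inj}(H,G)$ denotes the number of injective homomorphisms from $H$ to $G$. *)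

theory Defs
  imports Complex_Main "HOL-Library.FuncSet"
begin

definition graph :: "'a set \<Rightarrow> 'a set set \<Rightarrow> bool" where
  "graph V E \<longleftrightarrow> finite V \<and> (\<forall>e\<in>E. e \<subseteq> V \<and> card e = 2)"

definition degree :: "'a set \<Rightarrow> 'a set set \<Rightarrow> 'a \<Rightarrow> nat" where
  "degree V E v = card {u\<in>V. {u, v} \<in> E}"

definition dense :: "real \<Rightarrow> 'a set \<Rightarrow> 'a set set \<Rightarrow> bool" where
  "dense \<delta> V E \<longleftrightarrow> (\<forall>v\<in>V. real (degree V E v) \<ge> (1 - \<delta>) * real (card V))"

definition independent :: "'a set set \<Rightarrow> 'a set \<Rightarrow> bool" where
  "independent E A \<longleftrightarrow> (\<forall>u\<in>A. \<forall>v\<in>A. {u, v} \<notin> E)"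

definition is_hom :: "'b set \<Rightarrow> 'b set set \<Rightarrow> 'a set \<Rightarrow> 'a set set \<Rightarrow> ('b \<Rightarrow> 'a) \<Rightarrow> bool" where
  "is_hom VH EH VG EG \<phi> \<longleftrightarrow> \<phi> \<in> VH \<rightarrow> VG \<and> (\<forall>u\<in>VH. \<forall>v\<in>VH. {u, v} \<in> EH \<longrightarrow> {\<phi> u, \<phi> v} \<in> EG)"

definition inj_hom :: "'b set \<Rightarrow> 'b set set \<Rightarrow> 'a set \<Rightarrow> 'a set set \<Rightarrow> nat" where
  "inj_hom VH EH VG EG = card {\<phi> \<in> VH \<rightarrow>\<^sub>E VG. is_hom VH EH VG EG \<phi> \<and> inj_on \<phi> VH}"

definition del_vert_V :: "'a set \<Rightarrow> 'a \<Rightarrow> 'a set" where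
  "del_vert_V V x = V - {x}"

definition del_vert_E :: "'a set set \<Rightarrow> 'a \<Rightarrow> 'a set set" where
  "del_vert_E E x = {e\<in>E. x \<notin> e}"

end

theory Submission
  imports Defs
begin

lemma card_PiE_const: "finite S \<Longrightarrow> card (S \<rightarrow>\<^sub>E R) = card R ^ card S"
  by (simp add: card_PiE)

lemma card_NI:
  assumes S: "finite S" and R: "finite R" and xy: "x \<in> S" "y \<in> S" "x \<noteq> y"
  shows "card {\<phi> \<in> S \<rightarrow>\<^sub>E R. \<phi> x = \<phi> y} \<le> card R ^ (card S - 1)"
proof -
  let ?X = "{\<phi> \<in> S \<rightarrow>\<^sub>E R. \<phi> x = \<phi> y}"
  have inj: "inj_on (\<lambda>\<phi>. restrict \<phi> (S - {y})) ?X"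
  proof (rule inj_onI)
    fix \<phi> \<psi> assume p: "\<phi> \<in> ?X" and q: "\<psi> \<in> ?X"
      and eq: "restrict \<phi> (S - {y}) = restrict \<psi> (S - {y})"
    show "\<phi> = \<psi>"
    proof
      fix z
      have e: "\<And>z. z \<in> S - {y} \<Longrightarrow> \<phi> z = \<psi> z" using eq by (metis restrict_apply')
      show "\<phi> z = \<psi> z"
      proof (cases "z \<in> S")
        case True
        then show ?thesis using e[of x] e[of z] xy p q by (cases "z = y") auto
      next
        case False then show ?thesis using p q by (auto simp: PiE_def extensional_def)
      qed
    qed
  qed
  have "(\<lambda>\<phi>. restrict \<phi> (S - {y})) ` ?X \<subseteq> (S - {y}) \<rightarrow>\<^sub>E R" by (auto simp: PiE_iff split: if_splits)
  then have "card ?X \<le> card ((S - {y}) \<rightarrow>\<^sub>E R)"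
    using inj by (intro card_inj_on_le) (auto intro!: finite_PiE S R)
  also have "\<dots> = card R ^ (card S - 1)" using S xy by (simp add: card_PiE_const)
  finally show ?thesis .
qed

lemma card_NH:
  assumes S: "finite S" and R: "finite R" and xy: "x \<in> S" "y \<in> S" "x \<noteq> y"
    and D: "\<forall>c\<in>R. real (card {d\<in>R. P c d}) \<le> D"
  shows "real (card {\<phi> \<in> S \<rightarrow>\<^sub>E R. P (\<phi> x) (\<phi> y)}) \<le> real (card R) * D * real (card R) ^ (card S - 2)"
proof -
  define Q where "Q c = {\<phi> \<in> S \<rightarrow>\<^sub>E R. \<phi> x = c \<and> P c (\<phi> y)}" for c
  have sub: "{\<phi> \<in> S \<rightarrow>\<^sub>E R. P (\<phi> x) (\<phi> y)} \<subseteq> (\<Union>c\<in>R. Q c)"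
    using xy by (auto simp: Q_def PiE_iff split: if_splits)
  have cQ: "card (Q c) \<le> card {d\<in>R. P c d} * card R ^ (card S - 2)" for c
  proof -
    have inj: "inj_on (\<lambda>\<phi>. (\<phi> y, restrict \<phi> (S - {x, y}))) (Q c)"
    proof (rule inj_onI)
      fix \<phi> \<psi> assume p: "\<phi> \<in> Q c" and q: "\<psi> \<in> Q c"
        and eq: "(\<phi> y, restrict \<phi> (S - {x, y})) = (\<psi> y, restrict \<psi> (S - {x, y}))"
      show "\<phi> = \<psi>"
      proof
        fix z
        have e: "\<And>z. z \<in> S - {x, y} \<Longrightarrow> \<phi> z = \<psi> z" using eq by (metis prod.inject restrict_apply')
        show "\<phi> z = \<psi> z"
        proof (cases "z \<in> S")
          case True
          have fy: "\<phi> y = \<psi> y" using eq by simp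
          have fx: "\<phi> x = \<psi> x" using p q by (simp add: Q_def)
          show ?thesis
          proof (cases "z = y")
            case True then show ?thesis using fy by simp
          next
            case False
            show ?thesis
            proof (cases "z = x")
              case True then show ?thesis using fx by simp
            next
              case False then show ?thesis using e[of z] \<open>z \<noteq> y\<close> \<open>z \<in> S\<close> by simp
            qed
          qed
        next
          case False then show ?thesis using p q by (auto simp: Q_def PiE_def extensional_def)
        qed
      qed
    qed
    have "(\<lambda>\<phi>. (\<phi> y, restrict \<phi> (S - {x, y}))) ` Q c \<subseteq> {d\<in>R. P c d} \<times> ((S - {x, y}) \<rightarrow>\<^sub>E R)"
      using xy by (auto simp: Q_def PiE_iff split: if_splits)
    then have "card (Q c) \<le> card ({d\<in>R. P c d} \<times> ((S - {x, y}) \<rightarrow>\<^sub>E R))"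
      using inj by (intro card_inj_on_le) (auto intro!: finite_PiE finite_cartesian_product S R)
    also have "\<dots> = card {d\<in>R. P c d} * card R ^ (card S - 2)"
      using S xy by (simp add: card_PiE_const card_cartesian_product numeral_2_eq_2)
    finally show ?thesis .
  qed
  have "card {\<phi> \<in> S \<rightarrow>\<^sub>E R. P (\<phi> x) (\<phi> y)} \<le> card (\<Union>c\<in>R. Q c)"
  proof (rule card_mono)
    have "(\<Union>c\<in>R. Q c) \<subseteq> S \<rightarrow>\<^sub>E R" by (auto simp: Q_def)
    then show "finite (\<Union>c\<in>R. Q c)" by (rule finite_subset) (intro finite_PiE S R)
  qed (rule sub)
  also have "\<dots> \<le> (\<Sum>c\<in>R. card (Q c))" using R by (rule card_UN_le)
  finally have "real (card {\<phi> \<in> S \<rightarrow>\<^sub>E R. P (\<phi> x) (\<phi> y)}) \<le> (\<Sum>c\<in>R. real (card (Q c)))"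
    by (simp only: of_nat_sum[symmetric] of_nat_le_iff)
  also have "\<dots> \<le> (\<Sum>c\<in>R. D * real (card R) ^ (card S - 2))"
  proof (rule sum_mono)
    fix c assume c: "c \<in> R"
    have "real (card (Q c)) \<le> real (card {d\<in>R. P c d}) * real (card R) ^ (card S - 2)"
      using cQ[of c] by (simp only: of_nat_mult[symmetric] of_nat_power[symmetric] of_nat_le_iff)
    also have "\<dots> \<le> D * real (card R) ^ (card S - 2)"
      using D c by (intro mult_right_mono) auto
    finally show "real (card (Q c)) \<le> D * real (card R) ^ (card S - 2)" .
  qed
  also have "\<dots> = real (card R) * D * real (card R) ^ (card S - 2)" by simp
  finally show ?thesis .
qed

lemma inj_count_lb:
  assumes S: "finite S" and R: "finite R"
    and EH2: "\<forall>x\<in>S. \<forall>y\<in>S. {x,y} \<in> EH \<longrightarrow> x \<noteq> y"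
    and D: "\<forall>c\<in>R. real (card {d\<in>R. {c,d} \<notin> EG}) \<le> D" and D0: "0 \<le> D"
  shows "real (card {\<phi> \<in> S \<rightarrow>\<^sub>E R. inj_on \<phi> S \<and> (\<forall>x\<in>S. \<forall>y\<in>S. {x,y}\<in>EH \<longrightarrow> {\<phi> x, \<phi> y} \<in> EG)})
     \<ge> real (card R)^card S - real (card S)^2 * real (card R)^(card S - 1)
        - real (card S)^2 * (D * real (card R)^(card S - 1))"
proof -
  define T where "T = {\<phi> \<in> S \<rightarrow>\<^sub>E R. inj_on \<phi> S \<and> (\<forall>x\<in>S. \<forall>y\<in>S. {x,y}\<in>EH \<longrightarrow> {\<phi> x, \<phi> y} \<in> EG)}"
  define All where "All = S \<rightarrow>\<^sub>E R"
  define I1 where "I1 = {p \<in> S \<times> S. fst p \<noteq> snd p}"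
  define I2 where "I2 = {p \<in> S \<times> S. {fst p, snd p} \<in> EH}"
  define NI where "NI p = {\<phi> \<in> All. \<phi> (fst p) = \<phi> (snd p)}" for p
  define NH where "NH p = {\<phi> \<in> All. {\<phi> (fst p), \<phi> (snd p)} \<notin> EG}" for p
  have finAll: "finite All" unfolding All_def by (intro finite_PiE S R)
  have sub: "All - T \<subseteq> (\<Union>p\<in>I1. NI p) \<union> (\<Union>p\<in>I2. NH p)"
  proof
    fix \<phi> assume "\<phi> \<in> All - T"
    then have A: "\<phi> \<in> All" and nT: "\<not> (inj_on \<phi> S \<and> (\<forall>x\<in>S. \<forall>y\<in>S. {x,y}\<in>EH \<longrightarrow> {\<phi> x, \<phi> y} \<in> EG))"
      by (auto simp: T_def All_def)
    show "\<phi> \<in> (\<Union>p\<in>I1. NI p) \<union> (\<Union>p\<in>I2. NH p)"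
    proof (cases "inj_on \<phi> S")
      case False
      then obtain x y where "x \<in> S" "y \<in> S" "x \<noteq> y" "\<phi> x = \<phi> y" unfolding inj_on_def by blast
      then have "(x,y) \<in> I1" "\<phi> \<in> NI (x,y)" using A by (auto simp: I1_def NI_def)
      then show ?thesis by blast
    next
      case True
      then obtain x y where "x \<in> S" "y \<in> S" "{x,y} \<in> EH" "{\<phi> x, \<phi> y} \<notin> EG" using nT by blast
      then have "(x,y) \<in> I2" "\<phi> \<in> NH (x,y)" using A by (auto simp: I2_def NH_def)
      then show ?thesis by blast
    qed
  qed
  have finI1: "finite I1" and finI2: "finite I2" using S by (auto simp: I1_def I2_def)
  have cI1: "card I1 \<le> card S ^ 2"
  proof -
    have "card I1 \<le> card (S \<times> S)" using S by (intro card_mono) (auto simp: I1_def)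
    then show ?thesis by (simp add: card_cartesian_product power2_eq_square)
  qed
  have cI2: "card I2 \<le> card S ^ 2"
  proof -
    have "card I2 \<le> card (S \<times> S)" using S by (intro card_mono) (auto simp: I2_def)
    then show ?thesis by (simp add: card_cartesian_product power2_eq_square)
  qed
  have c1: "card All \<le> card T + card (All - T)"
  proof -
    have "card All \<le> card (T \<union> (All - T))" using finAll by (intro card_mono) (auto simp: T_def All_def)
    also have "\<dots> \<le> card T + card (All - T)" by (rule card_Un_le)
    finally show ?thesis .
  qed
  have c2: "card (All - T) \<le> card (\<Union>p\<in>I1. NI p) + card (\<Union>p\<in>I2. NH p)"
  proof -
    have "card (All - T) \<le> card ((\<Union>p\<in>I1. NI p) \<union> (\<Union>p\<in>I2. NH p))"
      using sub finAll by (intro card_mono) (auto simp: NI_def NH_def intro: finite_subset[OF _ finAll])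
    also have "\<dots> \<le> card (\<Union>p\<in>I1. NI p) + card (\<Union>p\<in>I2. NH p)" by (rule card_Un_le)
    finally show ?thesis .
  qed
  have c3: "card (\<Union>p\<in>I1. NI p) \<le> (\<Sum>p\<in>I1. card (NI p))" using finI1 by (rule card_UN_le)
  have c4: "card (\<Union>p\<in>I2. NH p) \<le> (\<Sum>p\<in>I2. card (NH p))" using finI2 by (rule card_UN_le)
  have "card All \<le> card T + (\<Sum>p\<in>I1. card (NI p)) + (\<Sum>p\<in>I2. card (NH p))"
    using c1 c2 c3 c4 by linarith
  then have main: "real (card All) \<le> real (card T) + (\<Sum>p\<in>I1. real (card (NI p))) + (\<Sum>p\<in>I2. real (card (NH p)))"
    by (simp only: of_nat_sum[symmetric] of_nat_add[symmetric] of_nat_le_iff)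
  have s1: "(\<Sum>p\<in>I1. real (card (NI p))) \<le> real (card S)^2 * real (card R)^(card S - 1)"
  proof -
    have "(\<Sum>p\<in>I1. real (card (NI p))) \<le> (\<Sum>p\<in>I1. real (card R)^(card S - 1))"
    proof (rule sum_mono)
      fix p assume "p \<in> I1"
      then show "real (card (NI p)) \<le> real (card R)^(card S - 1)"
        using card_NI[OF S R, of "fst p" "snd p"] unfolding NI_def All_def I1_def
        by (metis (mono_tags, lifting) mem_Collect_eq mem_Times_iff of_nat_le_iff of_nat_power)
    qed
    also have "\<dots> = real (card I1) * real (card R)^(card S - 1)" by simp
    also have "\<dots> \<le> real (card S)^2 * real (card R)^(card S - 1)"
      using cI1 by (intro mult_right_mono) (auto simp: of_nat_le_iff[symmetric] simp del: of_nat_le_iff)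
    finally show ?thesis .
  qed
  have s2: "(\<Sum>p\<in>I2. real (card (NH p))) \<le> real (card S)^2 * (D * real (card R)^(card S - 1))"
  proof -
    have "(\<Sum>p\<in>I2. real (card (NH p))) \<le> (\<Sum>p\<in>I2. D * real (card R)^(card S - 1))"
    proof (rule sum_mono)
      fix p assume p: "p \<in> I2"
      then have "fst p \<in> S" "snd p \<in> S" "fst p \<noteq> snd p" using EH2 by (auto simp: I2_def)
      then have "card {fst p, snd p} \<le> card S" using S by (intro card_mono) auto
      then have s2: "card S \<ge> 2" using \<open>fst p \<noteq> snd p\<close> by simp
      have eq: "real (card R) * D * real (card R)^(card S - 2) = D * real (card R)^(card S - 1)"
      proof -
        have "card S - 1 = Suc (card S - 2)" using s2 by simp
        then show ?thesis by simp
      qed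
      from card_NH[OF S R \<open>fst p \<in> S\<close> \<open>snd p \<in> S\<close> \<open>fst p \<noteq> snd p\<close>, of "\<lambda>c d. {c,d} \<notin> EG" D] D
      show "real (card (NH p)) \<le> D * real (card R)^(card S - 1)"
        unfolding NH_def All_def eq[symmetric] by simp
    qed
    also have "\<dots> = real (card I2) * (D * real (card R)^(card S - 1))" by simp
    also have "\<dots> \<le> real (card S)^2 * (D * real (card R)^(card S - 1))"
      using cI2 D0 by (intro mult_right_mono) (auto simp: of_nat_le_iff[symmetric] simp del: of_nat_le_iff)
    finally show ?thesis .
  qed
  have "real (card All) = real (card R)^card S" unfolding All_def using S by (simp add: card_PiE_const)
  then show ?thesis using main s1 s2 unfolding T_def by linarith
qed

lemma card_P:
  assumes VH: "finite VH" and VG: "finite VG" and w: "w \<in> VH" "u \<in> VH" "v \<in> VH"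
    and a: "a \<notin> X" "a \<notin> Y" "X \<inter> Y = {}" "a \<in> VG" "X \<subseteq> VG" "Y \<subseteq> VG"
  shows "{\<phi> \<in> VH \<rightarrow>\<^sub>E VG. \<phi> w = a \<and> \<phi> u \<in> X \<and> \<phi> v \<in> Y} = {} \<or>
    (card VH \<ge> 3 \<and> card {\<phi> \<in> VH \<rightarrow>\<^sub>E VG. \<phi> w = a \<and> \<phi> u \<in> X \<and> \<phi> v \<in> Y} \<le> card X * card Y * card VG ^ (card VH - 3))"
proof (cases "w \<noteq> u \<and> w \<noteq> v \<and> u \<noteq> v")
  case False
  then have "{\<phi> \<in> VH \<rightarrow>\<^sub>E VG. \<phi> w = a \<and> \<phi> u \<in> X \<and> \<phi> v \<in> Y} = {}" using a by auto
  then show ?thesis by blast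
next
  case True
  define F where "F z = (if z = w then {a} else if z = u then X else if z = v then Y else VG)" for z
  define V0 where "V0 = VH - {w, u, v}"
  have VHe: "VH = insert w (insert u (insert v V0))" using w by (auto simp: V0_def)
  have fV0: "finite V0" using VH by (simp add: V0_def)
  have nin: "w \<notin> insert u (insert v V0)" "u \<notin> insert v V0" "v \<notin> V0" using True by (auto simp: V0_def)
  have cVH: "card VH = card V0 + 3" using nin fV0 by (subst VHe) simp
  have sub: "{\<phi> \<in> VH \<rightarrow>\<^sub>E VG. \<phi> w = a \<and> \<phi> u \<in> X \<and> \<phi> v \<in> Y} \<subseteq> PiE VH F"
    using True a by (auto simp: F_def PiE_iff extensional_def)
  have "card {\<phi> \<in> VH \<rightarrow>\<^sub>E VG. \<phi> w = a \<and> \<phi> u \<in> X \<and> \<phi> v \<in> Y} \<le> card (PiE VH F)"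
    using VG VH a by (intro card_mono[OF _ sub] finite_PiE) (auto simp: F_def intro: finite_subset)
  also have "\<dots> = (\<Prod>z\<in>VH. card (F z))" using VH by (rule card_PiE)
  also have "\<dots> = card X * card Y * card VG ^ card V0"
  proof -
    have "(\<Prod>z\<in>V0. card (F z)) = (\<Prod>z\<in>V0. card VG)"
      by (rule prod.cong) (auto simp: F_def V0_def)
    then have "(\<Prod>z\<in>V0. card (F z)) = card VG ^ card V0" by simp
    moreover have "F w = {a}" "F u = X" "F v = Y" using True by (auto simp: F_def)
    ultimately show ?thesis using nin fV0 by (subst VHe) simp
  qed
  finally show ?thesis using cVH by simp
qed

lemma key_edge:
  assumes adjA: "\<forall>x\<in>A. \<forall>y\<in>VG - A. {x, y} \<in> EG" and adjB: "\<forall>x\<in>B. \<forall>y\<in>VG - B. {x, y} \<in> EG"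
    and indA: "independent EG A" and indB: "independent EG B"
    and AV: "A \<subseteq> VG" and BV: "B \<subseteq> VG" and disj: "A \<inter> B = {}" and a: "a \<in> A" and b: "b \<in> B"
    and C: "C \<subseteq> A - {a}"
    and clsx: "(x \<in> VG - B - C \<and> x \<noteq> a \<and> \<rho> x = x) \<or> (x = a \<and> \<rho> x = b) \<or> (x \<in> C \<and> \<rho> x \<in> B - {b}) \<or> (x \<in> B - {b} \<and> \<rho> x \<in> C)"
    and clsy: "(y \<in> VG - B - C \<and> y \<noteq> a \<and> \<rho> y = y) \<or> (y = a \<and> \<rho> y = b) \<or> (y \<in> C \<and> \<rho> y \<in> B - {b}) \<or> (y \<in> B - {b} \<and> \<rho> y \<in> C)"
    and e: "{x,y} \<in> EG"
    and nb1: "\<not>(x \<in> B - {b} \<and> y \<in> A - {a} - C)" and nb2: "\<not>(y \<in> B - {b} \<and> x \<in> A - {a} - C)"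
  shows "{\<rho> x, \<rho> y} \<in> EG"
proof -
  have e1: "{p,q} \<in> EG" "{q,p} \<in> EG" if "p \<in> A" "q \<in> VG" "q \<notin> A" for p q
    using adjA that by (auto simp: insert_commute)
  have e2: "{p,q} \<in> EG" "{q,p} \<in> EG" if "p \<in> B" "q \<in> VG" "q \<notin> B" for p q
    using adjB that by (auto simp: insert_commute)
  have i1: "{p,q} \<notin> EG" if "p \<in> A" "q \<in> A" for p q using indA that by (auto simp: independent_def)
  have i2: "{p,q} \<notin> EG" if "p \<in> B" "q \<in> B" for p q using indB that by (auto simp: independent_def)
  have CA: "c \<in> A" "c \<noteq> a" "c \<notin> B" "c \<in> VG" if "c \<in> C" for c using C that disj AV by auto
  have Bb: "c \<in> B" "c \<notin> A" "c \<in> VG" if "c \<in> B - {b}" for c using that disj BV by auto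
  have aB: "a \<notin> B" "b \<notin> A" "a \<in> VG" "b \<in> VG" using a b disj AV BV by auto
  from clsx show ?thesis
  proof (elim disjE conjE)
    assume x: "x \<in> VG - B - C" "x \<noteq> a" "\<rho> x = x"
    from clsy show ?thesis
    proof (elim disjE conjE)
      assume "y \<in> VG - B - C" "y \<noteq> a" "\<rho> y = y" then show ?thesis using x e by simp
    next
      assume y: "y = a" "\<rho> y = b"
      then have "x \<notin> A" using e i1[of x a] a by auto
      then show ?thesis using x y e2(2)[of b x] b by auto
    next
      assume y: "y \<in> C" "\<rho> y \<in> B - {b}"
      then show ?thesis using x e2(2)[of "\<rho> y" x] Bb[of "\<rho> y"] by auto
    next
      assume y: "y \<in> B - {b}" "\<rho> y \<in> C"
      then have "x \<notin> A" using nb2 x by auto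
      then show ?thesis using x y e1(2)[of "\<rho> y" x] CA[of "\<rho> y"] by auto
    qed
  next
    assume x: "x = a" "\<rho> x = b"
    from clsy show ?thesis
    proof (elim disjE conjE)
      assume y: "y \<in> VG - B - C" "y \<noteq> a" "\<rho> y = y"
      then show ?thesis using x e2(1)[of b y] aB b by auto
    next
      assume y: "y = a" "\<rho> y = b" then show ?thesis using x e i1[of a a] a by auto
    next
      assume y: "y \<in> C" "\<rho> y \<in> B - {b}" then show ?thesis using x e i1[of a y] a CA[of y] by auto
    next
      assume y: "y \<in> B - {b}" "\<rho> y \<in> C" then show ?thesis using x e2(1)[of b "\<rho> y"] aB b CA[of "\<rho> y"] by auto
    qed
  next
    assume x: "x \<in> C" "\<rho> x \<in> B - {b}"
    from clsy show ?thesis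
    proof (elim disjE conjE)
      assume y: "y \<in> VG - B - C" "y \<noteq> a" "\<rho> y = y"
      then show ?thesis using x e2(1)[of "\<rho> x" y] Bb[of "\<rho> x"] by auto
    next
      assume y: "y = a" "\<rho> y = b" then show ?thesis using x e i1[of x a] a CA[of x] by auto
    next
      assume y: "y \<in> C" "\<rho> y \<in> B - {b}" then show ?thesis using x e i1[of x y] CA[of x] CA[of y] by auto
    next
      assume y: "y \<in> B - {b}" "\<rho> y \<in> C" then show ?thesis using x e2(1)[of "\<rho> x" "\<rho> y"] Bb[of "\<rho> x"] CA[of "\<rho> y"] by auto
    qed
  next
    assume x: "x \<in> B - {b}" "\<rho> x \<in> C"
    from clsy show ?thesis
    proof (elim disjE conjE)
      assume y: "y \<in> VG - B - C" "y \<noteq> a" "\<rho> y = y"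
      then have "y \<notin> A" using nb1 x by auto
      then show ?thesis using x y e1(1)[of "\<rho> x" y] CA[of "\<rho> x"] by auto
    next
      assume y: "y = a" "\<rho> y = b" then show ?thesis using x e1(1)[of "\<rho> x" b] CA[of "\<rho> x"] aB by auto
    next
      assume y: "y \<in> C" "\<rho> y \<in> B - {b}" then show ?thesis using x e1(1)[of "\<rho> x" "\<rho> y"] CA[of "\<rho> x"] Bb[of "\<rho> y"] by auto
    next
      assume y: "y \<in> B - {b}" "\<rho> y \<in> C" then show ?thesis using x e i2[of x y] Bb[of x] Bb[of y] by auto
    qed
  qed
qed

lemma arith_final:
  fixes n r \<delta> :: real and m :: nat
  assumes r0: "0 \<le> r" and rn: "r \<le> n" and rl: "(1 - 2*\<delta>) * n \<le> r" and dn: "1 \<le> \<delta> * n"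
    and d0: "0 < \<delta>" and d1: "\<delta> \<le> 1/4"
  shows "r^m - real m^2 * r^(m-1) - real m^2 * (\<delta> * n * r^(m-1)) - real (m+2) * \<delta> * n^m
     \<ge> (1 - 3 * \<delta> * real (m+2)^3) * n^m"
proof -
  have n0: "0 \<le> n" using r0 rn by linarith
  have nm0: "0 \<le> n^m" using n0 by simp
  have "((1 - 2*\<delta>) * n)^m \<le> r^m" using rl d1 n0 by (intro power_mono) auto
  moreover have "1 + real m * (-2*\<delta>) \<le> (1 + (-2*\<delta>))^m" using d1 by (intro Bernoulli_inequality) auto
  moreover have "(1 - 2*\<delta>*real m) * n^m \<le> (1 + (-2*\<delta>))^m * n^m"
    using calculation(2) nm0 by (intro mult_right_mono) (auto simp: algebra_simps)
  moreover have "(1 + (-2*\<delta>))^m * n^m = ((1 - 2*\<delta>) * n)^m" by (simp add: power_mult_distrib)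
  ultimately have p1: "(1 - 2*\<delta>*real m) * n^m \<le> r^m" by linarith
  have rm: "r^(m-1) \<le> n^(m-1)" using r0 rn by (intro power_mono) auto
  have nn: "n * n^(m-1) = n^m" if "m > 0" using that by (cases m) auto
  have p2: "real m^2 * r^(m-1) \<le> \<delta> * real m^2 * n^m"
  proof (cases "m = 0")
    case True then show ?thesis by simp
  next
    case False
    have "real m^2 * r^(m-1) \<le> real m^2 * n^(m-1)" using rm by (intro mult_left_mono) auto
    also have "\<dots> \<le> real m^2 * ((\<delta> * n) * n^(m-1))" using dn n0
      using mult_right_mono[OF dn, of "n^(m-1)"] by (intro mult_left_mono) auto
    also have "\<dots> = \<delta> * real m^2 * n^m" using nn False by (simp add: mult_ac)
    finally show ?thesis .
  qed
  have p3: "real m^2 * (\<delta> * n * r^(m-1)) \<le> \<delta> * real m^2 * n^m"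
  proof (cases "m = 0")
    case True then show ?thesis by simp
  next
    case False
    have "real m^2 * (\<delta> * n * r^(m-1)) \<le> real m^2 * (\<delta> * n * n^(m-1))"
      using rm d0 n0 by (intro mult_left_mono) auto
    also have "\<dots> = \<delta> * real m^2 * n^m" using nn False by (simp add: mult_ac)
    finally show ?thesis .
  qed
  have poly: "2 * real m + 2 * real m^2 + real (m+2) \<le> 3 * real (m+2)^3"
  proof -
    have "2 * m + 2 * m^2 + (m+2) \<le> 3 * (m+2)^3" by (simp add: power2_eq_square power3_eq_cube algebra_simps)
    then show ?thesis by (metis (mono_tags, lifting) of_nat_add of_nat_le_iff of_nat_mult of_nat_numeral of_nat_power)
  qed
  have "\<delta> * n^m * (2 * real m + 2 * real m^2 + real (m+2)) \<le> \<delta> * n^m * (3 * real (m+2)^3)"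
    using poly d0 nm0 by (intro mult_left_mono) auto
  then show ?thesis using p1 p2 p3 by (simp add: algebra_simps)
qed


theorem lemma2p3:
  fixes VH :: "'b set" and EH :: "'b set set"
    and VG :: "'a set" and EG :: "'a set set"
    and A B :: "'a set" and \<delta> :: real and a b :: 'a
  assumes H: "graph VH EH" and Hedge: "EH \<noteq> {}"
    and \<delta>pos: "0 < \<delta>" and \<delta>le: "\<delta> \<le> 1/4"
    and G: "graph VG EG" and Gdense: "dense \<delta> VG EG"
    and AV: "A \<subseteq> VG" and BV: "B \<subseteq> VG" and disj: "A \<inter> B = {}"
    and indA: "independent EG A" and indB: "independent EG B"
    and card: "card A \<ge> card B" "card B \<ge> 1"
    and adjA: "\<forall>x\<in>A. \<forall>y\<in>VG - A. {x, y} \<in> EG"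
    and adjB: "\<forall>x\<in>B. \<forall>y\<in>VG - B. {x, y} \<in> EG"
    and a: "a \<in> A" and b: "b \<in> B"
  shows "real (inj_hom VH EH (del_vert_V VG a) (del_vert_E EG a))
    \<ge> real (inj_hom VH EH (del_vert_V VG b) (del_vert_E EG b))
       + 2 * real (card EH) * (real (card A) - real (card B))
         * (1 - 3 * \<delta> * real (card VH) ^ 3) * real (card VG) ^ (card VH - 2)"
proof -
  define n where "n = card VG"
  define h where "h = card VH"
  define k where "k = card A"
  define l where "l = card B"
  have finVG: "finite VG" and finVH: "finite VH" using G H by (auto simp: graph_def)
  have EHp: "e \<subseteq> VH" "card e = 2" if "e \<in> EH" for e using H that by (auto simp: graph_def)
  have EHne: "x \<noteq> y" if "{x,y} \<in> EH" for x y using EHp(2)[OF that] by auto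
  have finA: "finite A" and finB: "finite B" using finVG AV BV finite_subset by auto
  have ab: "a \<noteq> b" "a \<in> VG" "b \<in> VG" "a \<notin> B" "b \<notin> A" using a b disj AV BV by auto
  have i1: "{p,q} \<notin> EG" if "p \<in> A" "q \<in> A" for p q using indA that by (auto simp: independent_def)
  define A' where "A' = A - {a}"
  define B' where "B' = B - {b}"
  have cA': "card A' = k - 1" and cB': "card B' = l - 1" using a b finA finB
    by (auto simp: A'_def B'_def k_def l_def)
  have kl: "l \<le> k" "1 \<le> l" using card by (auto simp: k_def l_def)
  have "card B' \<le> card A'" using cA' cB' kl by simp
  moreover have "finite A'" "finite B'" using finA finB by (auto simp: A'_def B'_def)
  ultimately obtain \<tau> where \<tau>: "\<tau> ` B' \<subseteq> A'" "inj_on \<tau> B'"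
    using card_le_inj[of B' A'] by blast
  define C where "C = \<tau> ` B'"
  define A'' where "A'' = A' - C"
  have cC: "card C = l - 1" using \<tau> cB' by (simp add: C_def card_image)
  have CA': "C \<subseteq> A'" using \<tau> by (simp add: C_def)
  have cA'': "card A'' = k - l" unfolding A''_def using CA' cC cA' finA kl
    by (subst card_Diff_subset) (auto simp: A'_def intro: finite_subset)
  define R where "R = VG - A - B"
  define \<rho> where "\<rho> z = (if z = a then b else if z = b then a else if z \<in> B' then \<tau> z
      else if z \<in> C then the_inv_into B' \<tau> z else z)" for z
  have \<rho>\<rho>: "\<rho> (\<rho> z) = z" for z
  proof -
    consider "z = a" | "z = b" | "z \<in> B'" | "z \<in> C" | "z \<noteq> a" "z \<noteq> b" "z \<notin> B'" "z \<notin> C" by blast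
    then show ?thesis
    proof cases
      case 1 then show ?thesis using ab by (simp add: \<rho>_def)
    next
      case 2 then show ?thesis using ab by (simp add: \<rho>_def)
    next
      case 3
      have t: "\<tau> z \<in> A'" using \<tau> 3 by auto
      then have "\<tau> z \<noteq> a" "\<tau> z \<noteq> b" "\<tau> z \<notin> B'" "\<tau> z \<in> C" using disj 3 b by (auto simp: A'_def B'_def C_def)
      moreover have "z \<noteq> a" "z \<noteq> b" using 3 ab by (auto simp: B'_def)
      ultimately show ?thesis using 3 \<tau>(2) by (simp add: \<rho>_def the_inv_into_f_f)
    next
      case 4
      have zn: "z \<noteq> a" "z \<noteq> b" "z \<notin> B'" using 4 CA' disj b by (auto simp: A'_def B'_def)
      define w where "w = the_inv_into B' \<tau> z"
      have w: "w \<in> B'" "\<tau> w = z" using 4 \<tau>(2) unfolding w_def C_def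
        by (auto intro: the_inv_into_into f_the_inv_into_f)
      have "w \<noteq> a" "w \<noteq> b" using w ab by (auto simp: B'_def)
      then show ?thesis using zn w 4 by (simp add: \<rho>_def w_def[symmetric])
    next
      case 5 then show ?thesis by (simp add: \<rho>_def)
    qed
  qed
  have inj\<rho>: "\<rho> x = \<rho> y \<Longrightarrow> x = y" for x y by (metis \<rho>\<rho>)
  have \<rho>a: "\<rho> a = b" by (simp add: \<rho>_def)
  have \<rho>A'': "\<rho> z = z" if "z \<in> A''" for z
    using that disj ab by (auto simp: \<rho>_def A''_def A'_def B'_def)
  have cls: "(z \<in> VG - B - C \<and> z \<noteq> a \<and> \<rho> z = z) \<or> (z = a \<and> \<rho> z = b) \<or> (z \<in> C \<and> \<rho> z \<in> B - {b}) \<or> (z \<in> B - {b} \<and> \<rho> z \<in> C)"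
    if "z \<in> VG - {b}" for z
  proof -
    have zb: "z \<noteq> b" using that by simp
    consider "z = a" | "z \<in> B'" | "z \<in> C" | "z \<noteq> a" "z \<noteq> b" "z \<notin> B'" "z \<notin> C" using zb by blast
    then show ?thesis
    proof cases
      case 1 then show ?thesis using \<rho>a by simp
    next
      case 2 then have "z \<noteq> a" "z \<noteq> b" using ab by (auto simp: B'_def)
      then show ?thesis using 2 \<tau> by (auto simp: \<rho>_def C_def B'_def)
    next
      case 3
      have zn: "z \<noteq> a" "z \<noteq> b" "z \<notin> B'" using 3 CA' disj b by (auto simp: A'_def B'_def)
      have "the_inv_into B' \<tau> z \<in> B'" using 3 \<tau>(2) unfolding C_def by (auto intro: the_inv_into_into)
      then show ?thesis using 3 zn by (auto simp: \<rho>_def B'_def)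
    next
      case 4 then show ?thesis using that by (auto simp: \<rho>_def B'_def)
    qed
  qed
  have \<rho>VG: "\<rho> z \<in> VG" if "z \<in> VG" for z
  proof (cases "z = b")
    case True then show ?thesis using ab by (simp add: \<rho>_def)
  next
    case False
    then show ?thesis using cls[of z] that CA' BV AV ab by (auto simp: A'_def)
  qed
  have \<rho>na: "\<rho> z \<noteq> a" if "z \<noteq> b" for z using that \<rho>\<rho>[of z] \<rho>a by metis
  define VA where "VA = VG - {a}"
  define VB where "VB = VG - {b}"
  define \<Phi>A where "\<Phi>A = {\<phi> \<in> VH \<rightarrow>\<^sub>E VA. inj_on \<phi> VH \<and> (\<forall>p\<in>VH. \<forall>q\<in>VH. {p,q} \<in> EH \<longrightarrow> {\<phi> p, \<phi> q} \<in> EG \<and> a \<notin> {\<phi> p, \<phi> q})}"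
  define \<Phi>B where "\<Phi>B = {\<phi> \<in> VH \<rightarrow>\<^sub>E VB. inj_on \<phi> VH \<and> (\<forall>p\<in>VH. \<forall>q\<in>VH. {p,q} \<in> EH \<longrightarrow> {\<phi> p, \<phi> q} \<in> EG \<and> b \<notin> {\<phi> p, \<phi> q})}"
  have eqA: "inj_hom VH EH (del_vert_V VG a) (del_vert_E EG a) = card \<Phi>A"
    unfolding inj_hom_def \<Phi>A_def VA_def del_vert_V_def del_vert_E_def is_hom_def
    by (rule arg_cong[where f=card]) (auto simp: PiE_iff)
  have eqB: "inj_hom VH EH (del_vert_V VG b) (del_vert_E EG b) = card \<Phi>B"
    unfolding inj_hom_def \<Phi>B_def VB_def del_vert_V_def del_vert_E_def is_hom_def
    by (rule arg_cong[where f=card]) (auto simp: PiE_iff)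
  have fin\<Phi>A: "finite \<Phi>A"
  proof (rule finite_subset)
    show "\<Phi>A \<subseteq> VH \<rightarrow>\<^sub>E VA" by (auto simp: \<Phi>A_def)
    show "finite (VH \<rightarrow>\<^sub>E VA)" using finVH finVG by (intro finite_PiE) (auto simp: VA_def)
  qed
  have fin\<Phi>B: "finite \<Phi>B"
  proof (rule finite_subset)
    show "\<Phi>B \<subseteq> VH \<rightarrow>\<^sub>E VB" by (auto simp: \<Phi>B_def)
    show "finite (VH \<rightarrow>\<^sub>E VB)" using finVH finVG by (intro finite_PiE) (auto simp: VB_def)
  qed
  define F where "F \<phi> = (if a \<in> \<phi> ` VH then restrict (\<rho> \<circ> \<phi>) VH else \<phi>)" for \<phi> :: "'b \<Rightarrow> 'a"
  define Bad where "Bad = {\<phi> \<in> \<Phi>B. a \<in> \<phi> ` VH \<and> (\<exists>u\<in>VH. \<exists>v\<in>VH. {u,v} \<in> EH \<and> \<phi> u \<in> B' \<and> \<phi> v \<in> A'')}"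
  define Good where "Good = {\<psi> \<in> \<Phi>A. \<exists>w\<in>VH. \<exists>u\<in>VH. {w,u} \<in> EH \<and> \<psi> w = b \<and> \<psi> u \<in> A''}"
  define OE where "OE = {p \<in> VH \<times> VH. {fst p, snd p} \<in> EH}"
  have step1: "F \<phi> \<in> \<Phi>A" if \<phi>: "\<phi> \<in> \<Phi>B" "\<phi> \<notin> Bad" for \<phi>
  proof (cases "a \<in> \<phi> ` VH")
    case False
    then have Fe: "F \<phi> = \<phi>" by (simp add: F_def)
    show ?thesis using \<phi>(1) False unfolding Fe \<Phi>A_def \<Phi>B_def VA_def VB_def
      by (auto simp: PiE_iff)
  next
    case True
    then have Fe: "F \<phi> = restrict (\<rho> \<circ> \<phi>) VH" by (simp add: F_def)
    have vals: "\<phi> z \<in> VG - {b}" if "z \<in> VH" for z using \<phi>(1) that by (auto simp: \<Phi>B_def VB_def PiE_iff)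
    have inj\<phi>: "inj_on \<phi> VH" using \<phi>(1) by (simp add: \<Phi>B_def)
    have edges: "{\<phi> p, \<phi> q} \<in> EG" if "p \<in> VH" "q \<in> VH" "{p,q} \<in> EH" for p q
      using \<phi>(1) that by (auto simp: \<Phi>B_def)
    have nb: "\<not> (\<phi> p \<in> B' \<and> \<phi> q \<in> A'')" if "p \<in> VH" "q \<in> VH" "{p,q} \<in> EH" for p q
      using \<phi> True that unfolding Bad_def by blast
    have r1: "restrict (\<rho> \<circ> \<phi>) VH \<in> VH \<rightarrow>\<^sub>E VA"
      using vals \<rho>VG \<rho>na by (auto simp: VA_def PiE_iff)
    have r2: "inj_on (restrict (\<rho> \<circ> \<phi>) VH) VH"
      using inj\<phi> inj\<rho> by (auto simp: inj_on_def)
    have r3: "{restrict (\<rho> \<circ> \<phi>) VH p, restrict (\<rho> \<circ> \<phi>) VH q} \<in> EG \<and> a \<notin> {restrict (\<rho> \<circ> \<phi>) VH p, restrict (\<rho> \<circ> \<phi>) VH q}"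
      if pq: "p \<in> VH" "q \<in> VH" "{p,q} \<in> EH" for p q
    proof -
      have qp: "{q,p} \<in> EH" using pq by (simp add: insert_commute)
      have CAa: "C \<subseteq> A - {a}" using CA' by (simp add: A'_def)
      have n1: "\<not>(\<phi> p \<in> B - {b} \<and> \<phi> q \<in> A - {a} - C)" using nb[OF pq] by (simp add: B'_def A''_def A'_def)
      have n2: "\<not>(\<phi> q \<in> B - {b} \<and> \<phi> p \<in> A - {a} - C)" using nb[OF pq(2,1) qp] by (simp add: B'_def A''_def A'_def)
      have "{\<rho> (\<phi> p), \<rho> (\<phi> q)} \<in> EG"
        by (rule key_edge[OF adjA adjB indA indB AV BV disj a b CAa cls[OF vals[OF pq(1)]] cls[OF vals[OF pq(2)]] edges[OF pq] n1 n2])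
      moreover have "\<rho> (\<phi> p) \<noteq> a" "\<rho> (\<phi> q) \<noteq> a" using \<rho>na vals pq by auto
      ultimately show ?thesis using pq by simp
    qed
    show ?thesis unfolding Fe \<Phi>A_def using r1 r2 r3 by blast
  qed
  have step2: "inj_on F \<Phi>B"
  proof (rule inj_onI)
    fix \<phi>1 \<phi>2 assume p1: "\<phi>1 \<in> \<Phi>B" and p2: "\<phi>2 \<in> \<Phi>B" and eq: "F \<phi>1 = F \<phi>2"
    have v1: "\<phi>1 z \<in> VG - {b}" if "z \<in> VH" for z using p1 that by (auto simp: \<Phi>B_def VB_def PiE_iff)
    have v2: "\<phi>2 z \<in> VG - {b}" if "z \<in> VH" for z using p2 that by (auto simp: \<Phi>B_def VB_def PiE_iff)
    have x1: "\<phi>1 z = undefined" "\<phi>2 z = undefined" if "z \<notin> VH" for z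
      using p1 p2 that by (auto simp: \<Phi>B_def PiE_iff extensional_def)
    show "\<phi>1 = \<phi>2"
    proof (cases "a \<in> \<phi>1 ` VH"; cases "a \<in> \<phi>2 ` VH")
      assume "a \<notin> \<phi>1 ` VH" "a \<notin> \<phi>2 ` VH" then show ?thesis using eq by (simp add: F_def)
    next
      assume c1: "a \<in> \<phi>1 ` VH" and c2: "a \<notin> \<phi>2 ` VH"
      then obtain w where w: "w \<in> VH" "\<phi>1 w = a" by auto
      have "F \<phi>1 w = b" using c1 w \<rho>a by (simp add: F_def)
      moreover have "F \<phi>2 w \<noteq> b" using c2 v2[OF w(1)] by (simp add: F_def)
      ultimately show ?thesis using eq by simp
    next
      assume c1: "a \<notin> \<phi>1 ` VH" and c2: "a \<in> \<phi>2 ` VH"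
      then obtain w where w: "w \<in> VH" "\<phi>2 w = a" by auto
      have "F \<phi>2 w = b" using c2 w \<rho>a by (simp add: F_def)
      moreover have "F \<phi>1 w \<noteq> b" using c1 v1[OF w(1)] by (simp add: F_def)
      ultimately show ?thesis using eq by simp
    next
      assume c1: "a \<in> \<phi>1 ` VH" and c2: "a \<in> \<phi>2 ` VH"
      show ?thesis
      proof
        fix z show "\<phi>1 z = \<phi>2 z"
        proof (cases "z \<in> VH")
          case True
          have "F \<phi>1 z = F \<phi>2 z" using eq by simp
          then have "\<rho> (\<phi>1 z) = \<rho> (\<phi>2 z)" using c1 c2 True by (simp add: F_def)
          then show ?thesis by (rule inj\<rho>)
        next
          case False then show ?thesis using x1 by simp
        qed
      qed
    qed
  qed
  have step3: "Good \<inter> F ` \<Phi>B = {}"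
  proof (rule ccontr)
    assume "Good \<inter> F ` \<Phi>B \<noteq> {}"
    then obtain \<phi> where \<phi>: "\<phi> \<in> \<Phi>B" "F \<phi> \<in> Good" by blast
    then obtain w u where wu: "w \<in> VH" "u \<in> VH" "{w,u} \<in> EH" "F \<phi> w = b" "F \<phi> u \<in> A''"
      unfolding Good_def by blast
    have v: "\<phi> z \<in> VG - {b}" if "z \<in> VH" for z using \<phi>(1) that by (auto simp: \<Phi>B_def VB_def PiE_iff)
    show False
    proof (cases "a \<in> \<phi> ` VH")
      case False then show False using wu v[OF wu(1)] by (simp add: F_def)
    next
      case True
      then have "\<rho> (\<phi> w) = b" "\<rho> (\<phi> u) \<in> A''" using wu by (auto simp: F_def)
      then have "\<phi> w = a" "\<phi> u \<in> A''" using \<rho>\<rho> \<rho>a \<rho>A'' by metis+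
      moreover have "{\<phi> w, \<phi> u} \<in> EG" using \<phi>(1) wu by (auto simp: \<Phi>B_def)
      ultimately show False using i1[of a "\<phi> u"] a by (auto simp: A''_def A'_def)
    qed
  qed
  have "Bad \<subseteq> \<Phi>B" by (auto simp: Bad_def)
  have cnt1: "real (card \<Phi>A) \<ge> real (card \<Phi>B) - real (card Bad) + real (card Good)"
  proof -
    have sub: "F ` (\<Phi>B - Bad) \<union> Good \<subseteq> \<Phi>A" using step1 by (auto simp: Good_def)
    have d: "F ` (\<Phi>B - Bad) \<inter> Good = {}" using step3 by blast
    have fG: "finite Good" using fin\<Phi>A by (auto simp: Good_def)
    have "card (F ` (\<Phi>B - Bad)) + card Good = card (F ` (\<Phi>B - Bad) \<union> Good)"
      using d fG fin\<Phi>B by (subst card_Un_disjoint) auto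
    also have "\<dots> \<le> card \<Phi>A" using sub fin\<Phi>A by (rule card_mono[rotated])
    finally have 1: "card (F ` (\<Phi>B - Bad)) + card Good \<le> card \<Phi>A" .
    have 2: "card (F ` (\<Phi>B - Bad)) = card (\<Phi>B - Bad)"
      using step2 by (intro card_image) (auto intro: inj_on_subset)
    have 3: "card \<Phi>B \<le> card (\<Phi>B - Bad) + card Bad"
    proof -
      have "card \<Phi>B \<le> card ((\<Phi>B - Bad) \<union> Bad)" using fin\<Phi>B by (intro card_mono) (auto simp: Bad_def)
      also have "\<dots> \<le> card (\<Phi>B - Bad) + card Bad" by (rule card_Un_le)
      finally show ?thesis .
    qed
    show ?thesis using 1 2 3 by linarith
  qed
  have hk: "k \<le> n" "l \<le> n" using finVG AV BV by (auto simp: k_def l_def n_def intro: card_mono)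
  have k\<delta>: "real k \<le> \<delta> * real n"
  proof -
    have sub: "{u\<in>VG. {u,a}\<in>EG} \<subseteq> VG - A" using i1 a by auto
    have "degree VG EG a \<le> card (VG - A)" unfolding degree_def using finVG by (intro card_mono[OF _ sub]) auto
    also have "card (VG - A) = n - k" using AV finA by (simp add: card_Diff_subset n_def k_def)
    finally have "real (degree VG EG a) \<le> real n - real k" using hk by linarith
    moreover have "(1 - \<delta>) * real n \<le> real (degree VG EG a)" using Gdense ab by (auto simp: dense_def n_def)
    ultimately show ?thesis by (simp add: algebra_simps)
  qed
  have nnb: "\<forall>c\<in>R. real (card {d\<in>R. {c,d} \<notin> EG}) \<le> \<delta> * real n"
  proof
    fix c assume c: "c \<in> R"
    have sub: "{d\<in>R. {c,d} \<notin> EG} \<subseteq> VG - {u\<in>VG. {u,c}\<in>EG}" by (auto simp: R_def insert_commute)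
    have "card {d\<in>R. {c,d} \<notin> EG} \<le> card (VG - {u\<in>VG. {u,c}\<in>EG})" using finVG by (intro card_mono[OF _ sub]) auto
    also have "\<dots> = n - degree VG EG c" using finVG by (simp add: card_Diff_subset degree_def n_def)
    moreover have dg: "degree VG EG c \<le> n" unfolding degree_def n_def using finVG by (intro card_mono) auto
    ultimately have "real (card {d\<in>R. {c,d} \<notin> EG}) \<le> real n - real (degree VG EG c)"
      by (simp add: of_nat_diff[symmetric] del: of_nat_diff)
    moreover have "(1 - \<delta>) * real n \<le> real (degree VG EG c)" using Gdense c by (auto simp: dense_def n_def R_def)
    ultimately show "real (card {d\<in>R. {c,d} \<notin> EG}) \<le> \<delta> * real n" by (simp add: algebra_simps)
  qed
  have cR: "real (card R) = real n - real k - real l"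
  proof -
    have "card (A \<union> B) = k + l" using finA finB disj by (simp add: card_Un_disjoint k_def l_def)
    moreover have "R = VG - (A \<union> B)" by (auto simp: R_def)
    moreover have "card (VG - (A \<union> B)) = n - card (A \<union> B)" using AV BV finA finB unfolding n_def by (intro card_Diff_subset) auto
    moreover have "card (A \<union> B) \<le> n" using AV BV finVG by (auto simp: n_def intro: card_mono)
    ultimately show ?thesis by simp
  qed
  have finR: "finite R" using finVG by (simp add: R_def)
  have h2: "2 \<le> h"
  proof -
    obtain e where e: "e \<in> EH" using Hedge by blast
    then have "card e \<le> card VH" using EHp[OF e] finVH by (intro card_mono) auto
    then show ?thesis using EHp(2)[OF e] by (simp add: h_def)
  qed
  define K where "K = real k - real l"
  have K0: "0 \<le> K" using kl by (simp add: K_def)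
  have cA''r: "real (card A'') = K" using cA'' kl by (simp add: K_def)
  have finEH: "finite EH" using finVH EHp(1) by (metis Pow_iff finite_Pow_iff finite_subset subsetI)
  have finOE: "finite OE" using finVH by (simp add: OE_def)
  have cOE: "card OE = 2 * card EH"
  proof -
    define fib where "fib e = {p \<in> VH \<times> VH. {fst p, snd p} = e}" for e
    have OEe: "OE = (\<Union>e\<in>EH. fib e)" by (auto simp: OE_def fib_def)
    have cf: "card (fib e) = 2" if e: "e \<in> EH" for e
    proof -
      obtain x y where xy: "e = {x,y}" "x \<noteq> y" using EHp(2)[OF e] by (auto simp: card_2_iff)
      have "x \<in> VH" "y \<in> VH" using EHp(1)[OF e] xy by auto
      then have "fib e = {(x,y),(y,x)}" using xy by (auto simp: fib_def doubleton_eq_iff)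
      then show ?thesis using xy by simp
    qed
    have "card OE = (\<Sum>e\<in>EH. card (fib e))" unfolding OEe
      by (rule card_UN_disjoint) (use finEH finVH in \<open>auto simp: fib_def\<close>)
    also have "\<dots> = (\<Sum>e\<in>EH. 2)" using cf by simp
    finally show ?thesis by simp
  qed
  have finA'': "finite A''" using finA by (simp add: A''_def A'_def)
  define P where "P w p = {\<phi> \<in> VH \<rightarrow>\<^sub>E VG. \<phi> w = a \<and> \<phi> (fst p) \<in> B' \<and> \<phi> (snd p) \<in> A''}" for w p
  have Bsub: "Bad \<subseteq> (\<Union>w\<in>VH. \<Union>p\<in>OE. P w p)"
  proof
    fix \<phi> assume \<phi>: "\<phi> \<in> Bad"
    then obtain w u v where wuv: "w \<in> VH" "\<phi> w = a" "u \<in> VH" "v \<in> VH" "{u,v} \<in> EH" "\<phi> u \<in> B'" "\<phi> v \<in> A''"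
      unfolding Bad_def by blast
    have "\<phi> \<in> VH \<rightarrow>\<^sub>E VG" using \<phi> by (auto simp: Bad_def \<Phi>B_def VB_def PiE_iff)
    then have "\<phi> \<in> P w (u,v)" "(u,v) \<in> OE" using wuv by (auto simp: P_def OE_def)
    then show "\<phi> \<in> (\<Union>w\<in>VH. \<Union>p\<in>OE. P w p)" using wuv by blast
  qed
  have cP: "real (card (P w p)) \<le> K * \<delta> * real n ^ (h - 2)" if "w \<in> VH" "p \<in> OE" for w p
  proof -
    have pp: "fst p \<in> VH" "snd p \<in> VH" using that by (auto simp: OE_def)
    have X: "a \<notin> B'" "a \<notin> A''" "B' \<inter> A'' = {}" "a \<in> VG" "B' \<subseteq> VG" "A'' \<subseteq> VG"
      using ab disj AV BV by (auto simp: B'_def A''_def A'_def)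
    have nn0: "0 \<le> K * \<delta> * real n ^ (h - 2)" using K0 \<delta>pos by simp
    from card_P[OF finVH finVG that(1) pp X]
    show ?thesis
    proof
      assume "{\<phi> \<in> VH \<rightarrow>\<^sub>E VG. \<phi> w = a \<and> \<phi> (fst p) \<in> B' \<and> \<phi> (snd p) \<in> A''} = {}"
      then have "P w p = {}" by (simp add: P_def)
      then show ?thesis using nn0 by simp
    next
      assume as: "3 \<le> card VH \<and> card {\<phi> \<in> VH \<rightarrow>\<^sub>E VG. \<phi> w = a \<and> \<phi> (fst p) \<in> B' \<and> \<phi> (snd p) \<in> A''} \<le> card B' * card A'' * card VG ^ (card VH - 3)"
      then have "real (card (P w p)) \<le> real (card B') * K * real n ^ (h - 3)"
        unfolding P_def h_def n_def cA''r[symmetric] by (simp only: of_nat_mult[symmetric] of_nat_power[symmetric] of_nat_le_iff)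
      also have "\<dots> \<le> (\<delta> * real n) * K * real n ^ (h - 3)"
        using cB' kl k\<delta> K0 by (intro mult_right_mono) auto
      also have "\<dots> = K * \<delta> * real n ^ (h - 2)"
      proof -
        have "3 \<le> h" using as by (simp add: h_def)
        then have "h - 2 = Suc (h - 3)" by arith
        then show ?thesis by (simp add: mult_ac)
      qed
      finally show ?thesis .
    qed
  qed
  have cBad: "real (card Bad) \<le> real h * real (card OE) * (K * \<delta> * real n ^ (h - 2))"
  proof -
    have fP: "finite (P w p)" for w p using finVH finVG by (auto simp: P_def intro: finite_subset[OF _ finite_PiE[OF finVH]])
    have "card Bad \<le> card (\<Union>w\<in>VH. \<Union>p\<in>OE. P w p)"
      using Bsub finVH finOE fP by (intro card_mono) auto
    also have "\<dots> \<le> (\<Sum>w\<in>VH. card (\<Union>p\<in>OE. P w p))" using finVH by (rule card_UN_le)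
    also have "\<dots> \<le> (\<Sum>w\<in>VH. \<Sum>p\<in>OE. card (P w p))" using finOE by (intro sum_mono card_UN_le)
    finally have "real (card Bad) \<le> (\<Sum>w\<in>VH. \<Sum>p\<in>OE. real (card (P w p)))"
      by (simp only: of_nat_sum[symmetric] of_nat_le_iff)
    also have "\<dots> \<le> (\<Sum>w\<in>VH. \<Sum>p\<in>OE. K * \<delta> * real n ^ (h - 2))"
      using cP by (intro sum_mono) auto
    also have "\<dots> = real h * real (card OE) * (K * \<delta> * real n ^ (h - 2))" by (simp add: h_def)
    finally show ?thesis .
  qed
  define S' where "S' p = VH - {fst p, snd p}" for p :: "'b \<times> 'b"
  define T where "T p = {\<phi> \<in> S' p \<rightarrow>\<^sub>E R. inj_on \<phi> (S' p) \<and> (\<forall>x\<in>S' p. \<forall>y\<in>S' p. {x,y}\<in>EH \<longrightarrow> {\<phi> x, \<phi> y} \<in> EG)}" for p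
  define Z where "Z = (SIGMA p:OE. SIGMA x:A''. T p)"
  define ext where "ext q = (case q of (p, x, \<phi>) \<Rightarrow> \<phi>(fst p := b, snd p := x))" for q :: "('b \<times> 'b) \<times> 'a \<times> ('b \<Rightarrow> 'a)"
  have RA: "r \<notin> A" "r \<notin> B" "r \<in> VG" if "r \<in> R" for r using that by (auto simp: R_def)
  have A''A: "x \<in> A" "x \<noteq> a" "x \<notin> B" "x \<in> VG" if "x \<in> A''" for x using that disj AV by (auto simp: A''_def A'_def)
  have Zfacts: "fst p \<in> VH" "snd p \<in> VH" "fst p \<noteq> snd p" "{fst p, snd p} \<in> EH" "x \<in> A''"
     "ext (p,x,\<phi>) (fst p) = b" "ext (p,x,\<phi>) (snd p) = x"
     "\<And>z. z \<in> S' p \<Longrightarrow> ext (p,x,\<phi>) z = \<phi> z \<and> \<phi> z \<in> R"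
     "\<And>z. z \<notin> S' p \<Longrightarrow> \<phi> z = undefined"
     "inj_on \<phi> (S' p)" "\<And>y z. y \<in> S' p \<Longrightarrow> z \<in> S' p \<Longrightarrow> {y,z}\<in>EH \<Longrightarrow> {\<phi> y, \<phi> z} \<in> EG"
    if q: "(p,x,\<phi>) \<in> Z" for p x \<phi>
  proof -
    have p: "p \<in> OE" and x: "x \<in> A''" and \<phi>: "\<phi> \<in> T p" using q by (auto simp: Z_def)
    show "fst p \<in> VH" "snd p \<in> VH" "{fst p, snd p} \<in> EH" using p by (auto simp: OE_def)
    then show ne: "fst p \<noteq> snd p" using EHne by blast
    show "x \<in> A''" by (rule x)
    show "ext (p,x,\<phi>) (fst p) = b" "ext (p,x,\<phi>) (snd p) = x" using ne by (auto simp: ext_def)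
    show "\<And>z. z \<in> S' p \<Longrightarrow> ext (p,x,\<phi>) z = \<phi> z \<and> \<phi> z \<in> R" using \<phi> by (auto simp: ext_def S'_def T_def PiE_iff)
    show "\<And>z. z \<notin> S' p \<Longrightarrow> \<phi> z = undefined" using \<phi> by (auto simp: T_def PiE_iff extensional_def)
    show "inj_on \<phi> (S' p)" using \<phi> by (simp add: T_def)
    show "\<And>y z. y \<in> S' p \<Longrightarrow> z \<in> S' p \<Longrightarrow> {y,z}\<in>EH \<Longrightarrow> {\<phi> y, \<phi> z} \<in> EG" using \<phi> by (simp add: T_def)
  qed
  have extG: "ext (p,x,\<phi>) \<in> Good" if q: "(p,x,\<phi>) \<in> Z" for p x \<phi>
  proof -
    note Zf = Zfacts[OF q]
    define w where "w = fst p"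
    define u where "u = snd p"
    define \<psi> where "\<psi> = ext (p,x,\<phi>)"
    have wu: "w \<in> VH" "u \<in> VH" "w \<noteq> u" "{w,u} \<in> EH" using Zf by (auto simp: w_def u_def)
    have \<psi>w: "\<psi> w = b" and \<psi>u: "\<psi> u = x" using Zf by (auto simp: \<psi>_def w_def u_def)
    have \<psi>S: "\<psi> z = \<phi> z" "\<phi> z \<in> R" if "z \<in> VH" "z \<noteq> w" "z \<noteq> u" for z
      using Zf(8)[of z] that by (auto simp: \<psi>_def w_def u_def S'_def)
    have xA: "x \<in> A" "x \<noteq> a" "x \<notin> B" "x \<in> VG" using A''A Zf(5) by auto
    have cases3: "z = w \<or> z = u \<or> (z \<noteq> w \<and> z \<noteq> u)" for z by blast
    have val: "\<psi> z \<in> VA" if "z \<in> VH" for z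
      using cases3[of z] \<psi>w \<psi>u \<psi>S[OF that] xA ab RA a by (auto simp: VA_def)
    have ext\<psi>: "\<psi> z = undefined" if "z \<notin> VH" for z
    proof -
      have "z \<noteq> w" "z \<noteq> u" using that wu by auto
      moreover have "z \<notin> S' p" using that by (auto simp: S'_def)
      ultimately show ?thesis using Zf(9)[of z] by (simp add: \<psi>_def ext_def w_def u_def)
    qed
    have inS': "z \<in> S' p" if "z \<in> VH" "z \<noteq> w" "z \<noteq> u" for z using that by (auto simp: S'_def w_def u_def)
    have r1: "\<psi> \<in> VH \<rightarrow>\<^sub>E VA" using val ext\<psi> by (auto simp: PiE_iff extensional_def)
    have r2: "inj_on \<psi> VH"
    proof (rule inj_onI)
      fix y z assume y: "y \<in> VH" and z: "z \<in> VH" and eq: "\<psi> y = \<psi> z"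
      have bx: "b \<noteq> x" using xA b by auto
      show "y = z"
      proof (cases "y = w \<or> y = u")
        case True
        then show ?thesis
        proof
          assume yw: "y = w"
          show ?thesis using cases3[of z] eq \<psi>w \<psi>u \<psi>S[OF z] RA b bx yw by auto
        next
          assume yu: "y = u"
          show ?thesis using cases3[of z] eq \<psi>w \<psi>u \<psi>S[OF z] RA xA bx yu by auto
        qed
      next
        case False
        then have yS: "\<psi> y = \<phi> y" "\<phi> y \<in> R" using \<psi>S[OF y] by auto
        show ?thesis
        proof (cases "z = w \<or> z = u")
          case True
          then show ?thesis using eq yS \<psi>w \<psi>u RA[of "\<phi> y"] xA b by auto
        next
          case False
          then have "\<psi> z = \<phi> z" using \<psi>S[OF z] by auto
          then show ?thesis using eq yS Zf(10) inS'[OF y] inS'[OF z] \<open>\<not> (y = w \<or> y = u)\<close> False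
            by (auto simp: inj_on_def)
        qed
      qed
    qed
    have E1: "{b,r} \<in> EG" "{r,b} \<in> EG" "{x,r} \<in> EG" "{r,x} \<in> EG" if "r \<in> R" for r
      using adjA adjB RA[OF that] xA b by (auto simp: insert_commute)
    have E2: "{b,x} \<in> EG" "{x,b} \<in> EG" using adjB xA b by (auto simp: insert_commute)
    have r3: "{\<psi> y, \<psi> z} \<in> EG \<and> a \<notin> {\<psi> y, \<psi> z}" if yz: "y \<in> VH" "z \<in> VH" "{y,z} \<in> EH" for y z
    proof
      show "a \<notin> {\<psi> y, \<psi> z}" using val[OF yz(1)] val[OF yz(2)] by (auto simp: VA_def)
      have yzne: "y \<noteq> z" using EHne yz(3) by blast
      show "{\<psi> y, \<psi> z} \<in> EG"
      proof (cases "y = w")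
        case yw: True
        show ?thesis
        proof (cases "z = u")
          case True then show ?thesis using yw \<psi>w \<psi>u E2 by simp
        next
          case False
          then have "z \<noteq> w" "z \<noteq> u" using yzne yw by auto
          then show ?thesis using yw \<psi>w \<psi>S[OF yz(2)] E1(1)[of "\<phi> z"] by simp
        qed
      next
        case yw: False
        show ?thesis
        proof (cases "y = u")
          case yu: True
          show ?thesis
          proof (cases "z = w")
            case True then show ?thesis using yu \<psi>w \<psi>u E2 by simp
          next
            case False
            then have "z \<noteq> w" "z \<noteq> u" using yzne yu by auto
            then show ?thesis using yu \<psi>u \<psi>S[OF yz(2)] E1(3)[of "\<phi> z"] by simp
          qed
        next
          case yu: False
          have yS: "\<psi> y = \<phi> y" "\<phi> y \<in> R" using \<psi>S[OF yz(1)] yw yu by auto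
          show ?thesis
          proof (cases "z = w \<or> z = u")
            case True
            then show ?thesis using yS \<psi>w \<psi>u E1 by auto
          next
            case False
            then have "\<psi> z = \<phi> z" using \<psi>S[OF yz(2)] by auto
            then show ?thesis using yS Zf(11)[OF inS'[OF yz(1) yw yu]] inS'[OF yz(2)] False yz(3) by auto
          qed
        qed
      qed
    qed
    have "\<psi> \<in> \<Phi>A" unfolding \<Phi>A_def using r1 r2 r3 by blast
    moreover have "\<psi> u \<in> A''" using \<psi>u Zf(5) by simp
    ultimately show ?thesis unfolding Good_def \<psi>_def[symmetric] using wu \<psi>w by blast
  qed
  have extI: "inj_on ext Z"
  proof (rule inj_onI)
    fix q1 q2 assume q1: "q1 \<in> Z" and q2: "q2 \<in> Z" and eq: "ext q1 = ext q2"
    obtain p1 x1 \<phi>1 where q1e: "q1 = (p1, x1, \<phi>1)" by (cases q1) auto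
    obtain p2 x2 \<phi>2 where q2e: "q2 = (p2, x2, \<phi>2)" by (cases q2) auto
    note Z1 = Zfacts[OF q1[unfolded q1e]] and Z2 = Zfacts[OF q2[unfolded q2e]]
    define \<psi> where "\<psi> = ext q1"
    have \<psi>2: "\<psi> = ext q2" using eq by (simp add: \<psi>_def)
    have w: "fst p1 = fst p2"
    proof (rule ccontr)
      assume ne: "fst p1 \<noteq> fst p2"
      have "\<psi> (fst p1) = b" using Z1 by (simp add: \<psi>_def q1e)
      moreover have "\<psi> (fst p1) \<noteq> b"
      proof (cases "fst p1 = snd p2")
        case True then show ?thesis using Z2 \<psi>2 q2e A''A b by auto
      next
        case False
        then have "fst p1 \<in> S' p2" using ne Z1 by (auto simp: S'_def)
        then show ?thesis using Z2(8) \<psi>2 q2e RA b by fastforce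
      qed
      ultimately show False by simp
    qed
    have u: "snd p1 = snd p2"
    proof (rule ccontr)
      assume ne: "snd p1 \<noteq> snd p2"
      have "\<psi> (snd p1) = x1" using Z1 by (simp add: \<psi>_def q1e)
      moreover have "snd p1 \<in> S' p2" using ne Z1 w by (auto simp: S'_def)
      then have "\<psi> (snd p1) \<in> R" using Z2(8) \<psi>2 q2e by fastforce
      ultimately show False using Z1(5) A''A RA by blast
    qed
    have p: "p1 = p2" using w u by (simp add: prod_eq_iff)
    have x: "x1 = x2" using Z1(7) Z2(7) \<psi>2 p by (simp add: \<psi>_def q1e q2e)
    have \<phi>: "\<phi>1 = \<phi>2"
    proof
      fix z show "\<phi>1 z = \<phi>2 z"
      proof (cases "z \<in> S' p1")
        case True
        then show ?thesis using Z1(8)[of z] Z2(8)[of z] \<psi>2 p by (simp add: \<psi>_def q1e q2e)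
      next
        case False then show ?thesis using Z1(9) Z2(9) p by simp
      qed
    qed
    show "q1 = q2" using p x \<phi> q1e q2e by simp
  qed
  have finT: "finite (T p)" for p
  proof (rule finite_subset)
    show "T p \<subseteq> S' p \<rightarrow>\<^sub>E R" by (auto simp: T_def)
    show "finite (S' p \<rightarrow>\<^sub>E R)" using finVH finR by (intro finite_PiE) (auto simp: S'_def)
  qed
  have finGood: "finite Good" using fin\<Phi>A by (auto simp: Good_def)
  have cGZ: "card Z \<le> card Good"
    using extI extG finGood by (intro card_inj_on_le[of ext]) auto
  have cZ: "card Z = (\<Sum>p\<in>OE. card A'' * card (T p))"
    unfolding Z_def using finOE finA'' finT by (simp add: card_SigmaI)
  define m where "m = h - 2"
  have hm: "h = m + 2" using h2 by (simp add: m_def)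
  define L where "L = real (card R)^m - real m^2 * real (card R)^(m - 1) - real m^2 * (\<delta> * real n * real (card R)^(m - 1))"
  have cT: "real (card (T p)) \<ge> L" if p: "p \<in> OE" for p
  proof -
    have pp: "fst p \<in> VH" "snd p \<in> VH" "fst p \<noteq> snd p" using p EHne by (auto simp: OE_def)
    have cS: "card (S' p) = m" using pp finVH by (simp add: S'_def m_def h_def card_Diff_subset)
    have "\<forall>x\<in>S' p. \<forall>y\<in>S' p. {x,y} \<in> EH \<longrightarrow> x \<noteq> y" using EHne by blast
    from inj_count_lb[OF _ finR this nnb] finVH \<delta>pos
    show ?thesis unfolding L_def T_def cS[symmetric] by (simp add: S'_def)
  qed
  have cGood: "real (card Good) \<ge> real (card OE) * K * L"
  proof -
    have "real (card OE) * K * L = (\<Sum>p\<in>OE. K * L)" by simp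
    also have "\<dots> \<le> (\<Sum>p\<in>OE. real (card A'') * real (card (T p)))"
      using cT K0 by (intro sum_mono) (auto simp: cA''r intro: mult_left_mono)
    also have "\<dots> = real (card Z)" by (simp add: cZ)
    also have "\<dots> \<le> real (card Good)" using cGZ by simp
    finally show ?thesis .
  qed
  have rl: "(1 - 2*\<delta>) * real n \<le> real (card R)" using cR k\<delta> kl by (auto simp: algebra_simps)
  have r0: "0 \<le> real (card R)" by simp
  have rn: "real (card R) \<le> real n" using cR by simp
  have dn: "1 \<le> \<delta> * real n" using k\<delta> kl by simp
  have af: "L - real h * \<delta> * real n ^ m \<ge> (1 - 3 * \<delta> * real h ^ 3) * real n ^ m"
    using arith_final[OF r0 rn rl dn \<delta>pos \<delta>le, of m] unfolding L_def hm by simp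
  have "real (card OE) * K * ((1 - 3 * \<delta> * real h ^ 3) * real n ^ m)
      \<le> real (card OE) * K * (L - real h * \<delta> * real n ^ m)"
    using af K0 by (intro mult_left_mono) auto
  then have fin: "real (card \<Phi>A) \<ge> real (card \<Phi>B) + real (card OE) * K * ((1 - 3 * \<delta> * real h ^ 3) * real n ^ m)"
    using cnt1 cBad cGood unfolding m_def by (simp add: algebra_simps)
  show ?thesis using fin unfolding eqA eqB cOE K_def m_def h_def n_def k_def l_def
    by (simp add: mult_ac)
qed

end
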